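(* Let $n\ge3$, $-2<l<0$, $1<p\le p_*=\frac{n+2+2l}{n-2}$, and let $f$ satisfy $(f_1)$, $(f_2)$, $(f_2')$. Assume there exist positive numbers $r_0,C_1$ such that $f(r)\ge C_1 r^{l}$ for $r>r_0$. Then there exists a constant $C>0$, independent of $\alpha$, such that whenever $u(r;\alpha)$ (for any $0<\alpha<\infty$) is a positive entire solution (i.e. $u(r;\alpha)>0$ for all $r\ge0$), it satisfies $u(r;\alpha)\le C r^{\frac{2-n}{2}}$ for all $r\ge r_0$.
   Context: Standing hypotheses: $(f_1)$ $f\in C(0,\infty)$, $f(r)>0$ for $r>0$; $(f_2)$ $f(r)=O(r^l)$ as $r\to\infty$; $(f_2')$ $f(r)=O(r^\sigma)$ as $r\to0$, $\sigma>-2$. For $\alpha>0$, $u(r;\alpha)$ is the unique solution of (1.4) $u''+\frac{n-1}{r}u'+f(r)(u^+)^p=0$, $u(0;\alpha)=\alpha$, $u'(0;\alpha)=0$, $u^+=\max\{u,0\}$; it corresponds to the radial solution $u(|x|)$ of $-\Delta u=f(|x|)u^p$ on $\mathbb R^n$. *)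

theory Defs
  imports "HOL-Analysis.Analysis" "HOL-Library.Landau_Symbols"
begin

definition radial_sol :: "nat \<Rightarrow> (real \<Rightarrow> real) \<Rightarrow> real \<Rightarrow> real \<Rightarrow> (real \<Rightarrow> real) \<Rightarrow> bool" where
  "radial_sol n f p \<alpha> u \<longleftrightarrow>
     continuous_on {0..} u \<and> u 0 = \<alpha> \<and>
     (u has_real_derivative 0) (at 0 within {0..}) \<and>
     (\<exists>u'. \<forall>r>0. (u has_real_derivative u' r) (at r) \<and>
        (u' has_real_derivative (- ((real n - 1) / r) * u' r - f r * (max (u r) 0) powr p)) (at r))"

end

theory Submission
  imports Defs
begin

lemma g_deriv:
  fixes u' :: "real \<Rightarrow> real" and n :: nat and s F :: real
  assumes n3: "n \<ge> 3" and s: "s > 0"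
    and d: "(u' has_real_derivative (- ((real n - 1) / s) * u' s - F)) (at s)"
  shows "((\<lambda>s. s ^ (n - 1) * u' s) has_real_derivative (- (s ^ (n - 1) * F))) (at s)"
proof -
  have "((\<lambda>s. s ^ (n - 1) * u' s) has_real_derivative
     s ^ (n - 1) * (- ((real n - 1) / s) * u' s - F) + (real (n - 1) * s ^ (n - 1 - Suc 0)) * u' s) (at s)"
    by (rule DERIV_mult'[OF DERIV_pow d])
  moreover have "s ^ (n - 1) * (- ((real n - 1) / s) * u' s - F) + (real (n - 1) * s ^ (n - 1 - Suc 0)) * u' s
      = - (s ^ (n - 1) * F)"
  proof -
    obtain m where m: "n = m + 3" using n3 by (metis add.commute le_add_diff_inverse)
    show ?thesis using s unfolding m by (simp add: field_simps)
  qed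
  ultimately show ?thesis by simp
qed

lemma u'_nonpos:
  fixes u u' :: "real \<Rightarrow> real" and n :: nat
  assumes n3: "n \<ge> 3"
    and cont: "continuous_on {0..} u"
    and d0: "(u has_real_derivative 0) (at 0 within {0..})"
    and du: "\<forall>r>0. (u has_real_derivative u' r) (at r)"
    and G: "\<forall>r>0. \<exists>y. ((\<lambda>s. s ^ (n - 1) * u' s) has_real_derivative y) (at r) \<and> y \<le> 0"
    and a: "a > 0"
  shows "u' a \<le> 0"
proof (rule ccontr)
  assume "\<not> u' a \<le> 0"
  hence ua: "u' a > 0" by simp
  have mono: "u' x \<ge> u' a" if "0 < x" "x \<le> a" for x
  proof -
    have "a ^ (n - 1) * u' a \<le> x ^ (n - 1) * u' x"
      by (rule DERIV_nonpos_imp_nonincreasing[OF \<open>x \<le> a\<close>]) (use G that in auto)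
    moreover have "x ^ (n - 1) * u' a \<le> a ^ (n - 1) * u' a"
      using that ua by (intro mult_right_mono power_mono) auto
    ultimately have "x ^ (n - 1) * u' a \<le> x ^ (n - 1) * u' x" by linarith
    thus ?thesis using that by (simp add: mult_le_cancel_left)
  qed
  have "((\<lambda>y. (u y - u 0) / (y - 0)) \<longlongrightarrow> 0) (at 0 within {0..})"
    using d0 by (simp add: has_field_derivative_iff)
  from tendstoD[OF this ua] obtain d where d: "d > 0"
    and dd: "\<And>y. y \<in> {0..} \<Longrightarrow> y \<noteq> 0 \<Longrightarrow> dist y 0 < d \<Longrightarrow> dist ((u y - u 0) / (y - 0)) 0 < u' a"
    unfolding eventually_at by blast
  define y where "y = min d a / 2"
  have y: "0 < y" "y < d" "y \<le> a" using d a by (auto simp: y_def)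
  have "\<exists>l z. 0 < z \<and> z < y \<and> (u has_real_derivative l) (at z) \<and> u y - u 0 = (y - 0) * l"
    apply (rule MVT)
    using y apply simp
     apply (rule continuous_on_subset[OF cont]) apply auto[1]
    using du real_differentiable_def by auto
  then obtain l z where z: "0 < z" "z < y" "(u has_real_derivative l) (at z)" "u y - u 0 = y * l"
    by auto
  have "l = u' z" using DERIV_unique z(3) du z(1) by blast
  hence "l \<ge> u' a" using mono z y by auto
  moreover have "(u y - u 0) / y = l" using z y by (simp add: field_simps)
  moreover have "dist ((u y - u 0) / (y - 0)) 0 < u' a" using dd y by auto
  ultimately show False by (simp add: dist_real_def)
qed

lemma u_lower:
  fixes u u' :: "real \<Rightarrow> real" and n :: nat and r :: real
  assumes n3: "n \<ge> 3"
    and du: "\<forall>r>0. (u has_real_derivative u' r) (at r)"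
    and gni: "\<And>x y. 0 < x \<Longrightarrow> x \<le> y \<Longrightarrow> y ^ (n - 1) * u' y \<le> x ^ (n - 1) * u' x"
    and pos: "\<forall>r>0. u r > 0" and r: "r > 0"
  shows "u r + r ^ (n - 1) * u' r * r powr (2 - real n) / (real n - 2) \<ge> 0"
proof -
  define G where "G = r ^ (n - 1) * u' r"
  define k where "k s = u s + G * s powr (2 - real n) / (real n - 2)" for s
  have n2: "real n - 2 > 0" using n3 by simp
  have kd: "(k has_real_derivative (u' s + G * ((2 - real n) * s powr (2 - real n - 1)) / (real n - 2))) (at s)"
    if "s > 0" for s
    unfolding k_def
    by (intro DERIV_add DERIV_cdivide DERIV_cmult has_real_derivative_powr that du[rule_format])
  have kdn: "u' s + G * ((2 - real n) * s powr (2 - real n - 1)) / (real n - 2) \<le> 0" if "s \<ge> r" for s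
  proof -
    have s: "s > 0" using that r by simp
    have e: "G * ((2 - real n) * s powr (2 - real n - 1)) / (real n - 2) = - G * s powr (1 - real n)"
      using n2 by (simp add: field_simps)
    have ip: "s powr (1 - real n) = inverse (s ^ (n - 1))"
    proof -
      have "s powr (1 - real n) = inverse (s powr real (n - 1))"
        using n3 s by (simp add: powr_minus[symmetric] of_nat_diff)
      also have "\<dots> = inverse (s ^ (n - 1))" using s by (simp add: powr_realpow)
      finally show ?thesis .
    qed
    have "s ^ (n - 1) * u' s \<le> G" unfolding G_def using gni[OF r that] .
    hence "u' s \<le> G * inverse (s ^ (n - 1))" using s by (simp add: field_simps)
    thus ?thesis using e ip by simp
  qed
  have kle: "k s \<le> k r" if "s \<ge> r" for s
  proof (rule DERIV_nonpos_imp_nonincreasing[OF that])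
    fix x assume x: "r \<le> x" "x \<le> s"
    hence "x > 0" using r by simp
    thus "\<exists>y. (k has_real_derivative y) (at x) \<and> y \<le> 0" using kd[of x] kdn[OF x(1)] by blast
  qed
  show ?thesis
  proof (rule ccontr)
    assume "\<not> ?thesis"
    hence kr: "k r < 0" unfolding k_def G_def by simp
    have "((\<lambda>s. G * s powr (2 - real n) / (real n - 2)) \<longlongrightarrow> G * 0 / (real n - 2)) at_top"
      using n3 by (intro tendsto_divide tendsto_mult tendsto_const tendsto_neg_powr filterlim_ident) auto
    hence "eventually (\<lambda>s. k r < G * s powr (2 - real n) / (real n - 2)) at_top"
      using kr by (intro order_tendstoD(1)) auto
    moreover have "eventually (\<lambda>s. s \<ge> r) at_top" by (rule eventually_ge_at_top)
    ultimately have "eventually (\<lambda>s. k r < G * s powr (2 - real n) / (real n - 2) \<and> s \<ge> r) at_top"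
      by (rule eventually_conj)
    then obtain N where "\<forall>s\<ge>N. k r < G * s powr (2 - real n) / (real n - 2) \<and> s \<ge> r"
      unfolding eventually_at_top_linorder by blast
    then obtain s where s: "k r < G * s powr (2 - real n) / (real n - 2)" "s \<ge> r"
      by blast
    have "u s > 0" using pos s r by simp
    hence "k s > k r" using s unfolding k_def by simp
    thus False using kle s by fastforce
  qed
qed

lemma alg_aux: "(c::real) * (1 - t) / q * U * R = c * U * R / q - c * U * (R * t) / q"
  by (simp add: algebra_simps diff_divide_distrib)

lemma g_upper:
  fixes u u' f :: "real \<Rightarrow> real" and n :: nat and c r0 l p r :: real
  assumes n3: "n \<ge> 3" and l: "l > -2" and p: "p > 0"
    and du: "\<forall>r>0. (u has_real_derivative u' r) (at r)"
    and dg: "\<forall>s>0. ((\<lambda>s. s ^ (n - 1) * u' s) has_real_derivative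
                 - (s ^ (n - 1) * (f s * max (u s) 0 powr p))) (at s)"
    and unp: "\<forall>s>0. u' s \<le> 0"
    and pos: "\<forall>s>0. u s > 0"
    and fc: "\<forall>s\<ge>r0/2. f s \<ge> c * s powr l" and c: "c > 0" and r0: "r0 > 0" and r: "r \<ge> r0"
  shows "- (r ^ (n - 1) * u' r) \<ge> c * (1 - 2 powr (- (real n + l))) / (real n + l) * u r powr p * r powr (real n + l)"
proof -
  define q where "q = real n + l"
  have q: "q > 0" using n3 l by (simp add: q_def)
  define A where "A = c * u r powr p"
  define h where "h s = s ^ (n - 1) * u' s + A * s powr q / q" for s
  have r0': "r > 0" using r r0 by simp
  have hd: "(h has_real_derivative (- (s ^ (n - 1) * (f s * max (u s) 0 powr p)) + A * (q * s powr (q - 1)) / q)) (at s)"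
    if "s > 0" for s
    unfolding h_def
    by (intro DERIV_add DERIV_cdivide DERIV_cmult has_real_derivative_powr that dg[rule_format])
  have hn: "- (s ^ (n - 1) * (f s * max (u s) 0 powr p)) + A * (q * s powr (q - 1)) / q \<le> 0"
    if s: "r / 2 \<le> s" "s \<le> r" for s
  proof -
    have s0: "s > 0" using s r0' by simp
    have usr: "u r \<le> u s"
    proof (rule DERIV_nonpos_imp_nonincreasing[OF s(2)])
      fix x assume "s \<le> x" "x \<le> r"
      hence "x > 0" using s0 by simp
      thus "\<exists>y. (u has_real_derivative y) (at x) \<and> y \<le> 0" using du unp by blast
    qed
    have ms: "max (u s) 0 = u s" using pos s0 by simp
    have up: "u r powr p \<le> u s powr p"
    proof -
      have "u r > 0" using pos r0' by simp
      thus ?thesis using p by (intro powr_mono2[OF _ _ usr]) auto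
    qed
    have fs: "f s \<ge> c * s powr l" using fc s r by simp
    have "c * s powr l * u r powr p \<le> f s * u s powr p"
    proof -
      have "0 \<le> c * s powr l" using c by simp
      hence "f s \<ge> 0" using fs by linarith
      thus ?thesis using fs up c by (intro mult_mono) auto
    qed
    hence "s ^ (n - 1) * (c * s powr l * u r powr p) \<le> s ^ (n - 1) * (f s * u s powr p)"
      using s0 by (intro mult_left_mono) auto
    moreover have sq: "s ^ (n - 1) * s powr l = s powr (q - 1)"
    proof -
      have "s ^ (n - 1) = s powr real (n - 1)" using s0 by (simp add: powr_realpow)
      hence "s ^ (n - 1) * s powr l = s powr (real (n - 1) + l)" by (simp add: powr_add)
      thus ?thesis using n3 by (simp add: q_def of_nat_diff algebra_simps)
    qed
    moreover have "s ^ (n - 1) * (c * s powr l * u r powr p) = A * s powr (q - 1)"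
      unfolding A_def sq[symmetric] by (simp only: mult_ac)
    moreover have "A * (q * s powr (q - 1)) / q = A * s powr (q - 1)" using q by simp
    ultimately show ?thesis unfolding ms by linarith
  qed
  have "h r \<le> h (r / 2)"
  proof (rule DERIV_nonpos_imp_nonincreasing[of "r / 2" r h])
    show "r / 2 \<le> r" using r0' by simp
    fix x assume x: "r / 2 \<le> x" "x \<le> r"
    hence "x > 0" using r0' by simp
    thus "\<exists>y. (h has_real_derivative y) (at x) \<and> y \<le> 0" using hd[of x] hn[OF x] by blast
  qed
  moreover have "(r / 2) ^ (n - 1) * u' (r / 2) \<le> 0"
    using unp r0' by (simp add: mult_nonneg_nonpos)
  moreover have "(r / 2) powr q = r powr q * 2 powr (- q)"
    using r0' by (simp add: powr_divide powr_minus_divide)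
  ultimately have "r ^ (n - 1) * u' r + A * r powr q / q \<le> A * (r powr q * 2 powr (- q)) / q"
    unfolding h_def by simp
  moreover have "c * (1 - 2 powr (- q)) / q * u r powr p * r powr q
      = A * r powr q / q - A * (r powr q * 2 powr (- q)) / q"
    unfolding A_def by (rule alg_aux)
  ultimately show ?thesis unfolding q_def[symmetric] by linarith
qed

lemma final_bound:
  fixes n :: nat and l p r0 r U g k :: real
  assumes n3: "n \<ge> 3" and l: "-2 < l" and p1: "1 < p"
    and pst: "p \<le> (real n + 2 + 2 * l) / (real n - 2)"
    and r0: "r0 > 0" and r: "r \<ge> r0" and U: "U > 0" and k: "k > 0"
    and low: "U + g * r powr (2 - real n) / (real n - 2) \<ge> 0"
    and up: "- g \<ge> k * U powr p * r powr (real n + l)"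
  shows "U \<le> ((real n - 2) / k) powr (1 / (p - 1)) * r0 powr ((real n - 2) / 2 - (2 + l) / (p - 1))
           * r powr ((2 - real n) / 2)"
proof -
  have n2: "real n - 2 > 0" using n3 by simp
  have rp: "r > 0" using r r0 by simp
  have "(real n - 2) * U \<ge> - g * r powr (2 - real n)"
    using low n2 by (simp add: field_simps)
  moreover have "- g * r powr (2 - real n) \<ge> k * U powr p * r powr (real n + l) * r powr (2 - real n)"
    using up by (intro mult_right_mono) auto
  moreover have "r powr (real n + l) * r powr (2 - real n) = r powr (2 + l)"
    by (simp add: powr_add[symmetric] add.commute)
  moreover have "U powr p = U * U powr (p - 1)"
    using U by (simp add: powr_mult_base)
  ultimately have "(real n - 2) * U \<ge> U * (k * U powr (p - 1) * r powr (2 + l))"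
    by (simp add: algebra_simps)
  hence A: "real n - 2 \<ge> k * U powr (p - 1) * r powr (2 + l)"
    using U by (simp add: mult_le_cancel_left)
  have rinv: "r powr (2 + l) * r powr (- (2 + l)) = 1"
    using rp by (simp add: powr_add[symmetric])
  have B: "U powr (p - 1) \<le> (real n - 2) / k * r powr (- (2 + l))"
  proof -
    have "k * U powr (p - 1) * r powr (2 + l) * r powr (- (2 + l)) \<le> (real n - 2) * r powr (- (2 + l))"
      using A by (intro mult_right_mono) auto
    hence "k * U powr (p - 1) \<le> (real n - 2) * r powr (- (2 + l))"
      using rinv by (simp add: mult.assoc)
    thus ?thesis using k by (simp add: field_simps)
  qed
  have "U = (U powr (p - 1)) powr (1 / (p - 1))"
    using U p1 by (simp add: powr_powr)
  also have "\<dots> \<le> ((real n - 2) / k * r powr (- (2 + l))) powr (1 / (p - 1))"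
    using B p1 by (intro powr_mono2) auto
  also have "\<dots> = ((real n - 2) / k) powr (1 / (p - 1)) * (r powr (- (2 + l))) powr (1 / (p - 1))"
    by (rule powr_mult)
  also have "(r powr (- (2 + l))) powr (1 / (p - 1)) = r powr (- (2 + l) / (p - 1))"
    by (simp add: powr_powr)
  also have "r powr (- (2 + l) / (p - 1)) = r powr ((2 - real n) / 2) * r powr ((real n - 2) / 2 - (2 + l) / (p - 1))"
  proof -
    have ee: "(2 - real n) / 2 + ((real n - 2) / 2 - (2 + l) / (p - 1)) = - (2 + l) / (p - 1)"
      using p1 by (simp add: field_simps)
    show ?thesis by (simp only: powr_add[symmetric] ee)
  qed
  also have "r powr ((real n - 2) / 2 - (2 + l) / (p - 1)) \<le> r0 powr ((real n - 2) / 2 - (2 + l) / (p - 1))"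
  proof (rule powr_mono2'[OF _ r0 r])
    have "p * (real n - 2) \<le> real n + 2 + 2 * l" using pst n2 by (simp add: pos_le_divide_eq)
    hence "(p - 1) * (real n - 2) \<le> 2 * (2 + l)" by (simp add: algebra_simps)
    hence "(real n - 2) / 2 \<le> (2 + l) / (p - 1)" using p1 by (simp add: field_simps)
    thus "(real n - 2) / 2 - (2 + l) / (p - 1) \<le> 0" by simp
  qed
  hence "((real n - 2) / k) powr (1 / (p - 1)) * (r powr ((2 - real n) / 2) * r powr ((real n - 2) / 2 - (2 + l) / (p - 1)))
      \<le> ((real n - 2) / k) powr (1 / (p - 1)) * (r powr ((2 - real n) / 2) * r0 powr ((real n - 2) / 2 - (2 + l) / (p - 1)))"
    by (intro mult_left_mono) auto
  finally show ?thesis by (simp add: mult_ac)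
qed

theorem lemma4p2:
  fixes n :: nat and l p r0 C1 :: real and f :: "real \<Rightarrow> real"
  assumes "n \<ge> 3" and "-2 < l" and "l < 0"
    and "1 < p" and "p \<le> (real n + 2 + 2 * l) / (real n - 2)"
    and f1: "continuous_on {0<..} f" "\<forall>r>0. f r > 0"
    and f2: "f \<in> O[at_top](\<lambda>r. r powr l)"
    and f2': "\<exists>\<sigma>>-2. f \<in> O[at_right 0](\<lambda>r. r powr \<sigma>)"
    and "r0 > 0" and "C1 > 0" and "\<forall>r>r0. f r \<ge> C1 * r powr l"
  shows "\<exists>C>0. \<forall>\<alpha>>0. \<forall>u. radial_sol n f p \<alpha> u \<and> (\<forall>r\<ge>0. u r > 0) \<longrightarrow>
           (\<forall>r\<ge>r0. u r \<le> C * r powr ((2 - real n) / 2))"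
proof -
  note n3 = \<open>n \<ge> 3\<close> and lg = \<open>-2 < l\<close> and ll = \<open>l < 0\<close> and p1 = \<open>1 < p\<close>
    and pst = \<open>p \<le> (real n + 2 + 2 * l) / (real n - 2)\<close> and r0 = \<open>r0 > 0\<close>
    and C1 = \<open>C1 > 0\<close> and fC1 = \<open>\<forall>r>r0. f r \<ge> C1 * r powr l\<close>
  have "{r0/2..r0} \<subseteq> {0<..}" using r0 by auto
  hence "continuous_on {r0/2..r0} f" using f1(1) continuous_on_subset by blast
  then obtain x0 where x0: "x0 \<in> {r0/2..r0}" and x0m: "\<forall>y\<in>{r0/2..r0}. f x0 \<le> f y"
    using continuous_attains_inf[of "{r0/2..r0}" f] r0 by auto
  define m where "m = f x0"
  have m: "m > 0" unfolding m_def using x0 r0 f1(2) by auto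
  define c where "c = min C1 (m / (r0 / 2) powr l)"
  have c: "c > 0" unfolding c_def using m C1 r0 by simp
  have fc: "\<forall>s\<ge>r0/2. f s \<ge> c * s powr l"
  proof (intro allI impI)
    fix s assume s: "s \<ge> r0 / 2"
    show "f s \<ge> c * s powr l"
    proof (cases "s > r0")
      case True
      hence "f s \<ge> C1 * s powr l" using fC1 by auto
      moreover have "c * s powr l \<le> C1 * s powr l" unfolding c_def by (intro mult_right_mono) auto
      ultimately show ?thesis by linarith
    next
      case False
      hence "f s \<ge> m" using x0m s unfolding m_def by auto
      have "s powr l \<le> (r0 / 2) powr l" using s r0 ll by (intro powr_mono2') auto
      hence "c * s powr l \<le> c * (r0 / 2) powr l" using c by (intro mult_left_mono) auto
      also have "\<dots> \<le> m / (r0 / 2) powr l * (r0 / 2) powr l"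
        unfolding c_def by (intro mult_right_mono) auto
      also have "\<dots> = m" using r0 by simp
      finally show ?thesis using \<open>f s \<ge> m\<close> by linarith
    qed
  qed
  define q where "q = real n + l"
  have q: "q > 0" using n3 lg by (simp add: q_def)
  define k where "k = c * (1 - 2 powr (- q)) / q"
  have "2 powr (- q) < 2 powr 0" using q by (intro powr_less_mono) auto
  hence k: "k > 0" unfolding k_def using c q by simp
  define C where "C = ((real n - 2) / k) powr (1 / (p - 1)) * r0 powr ((real n - 2) / 2 - (2 + l) / (p - 1))"
  have Cpos: "C > 0" unfolding C_def using n3 k r0 by simp
  show ?thesis
  proof (intro exI[of _ C] conjI allI impI Cpos)
    fix \<alpha> :: real and u :: "real \<Rightarrow> real" and r :: real
    assume "\<alpha> > 0" and H: "radial_sol n f p \<alpha> u \<and> (\<forall>r\<ge>0. u r > 0)" and r: "r \<ge> r0"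
    from H have cont: "continuous_on {0..} u" and d0: "(u has_real_derivative 0) (at 0 within {0..})"
      and pos0: "\<forall>r\<ge>0. u r > 0"
      unfolding radial_sol_def by auto
    from H obtain u' where u': "\<forall>r>0. (u has_real_derivative u' r) (at r) \<and>
        (u' has_real_derivative (- ((real n - 1) / r) * u' r - f r * (max (u r) 0) powr p)) (at r)"
      unfolding radial_sol_def by blast
    have du: "\<forall>r>0. (u has_real_derivative u' r) (at r)" using u' by blast
    have pos: "\<forall>r>0. u r > 0" using pos0 by auto
    have dg: "\<forall>s>0. ((\<lambda>s. s ^ (n - 1) * u' s) has_real_derivative
                 - (s ^ (n - 1) * (f s * max (u s) 0 powr p))) (at s)"
      using u' g_deriv[OF n3] by blast
    have dgn: "- (s ^ (n - 1) * (f s * max (u s) 0 powr p)) \<le> 0" if "s > 0" for s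
    proof -
      have "f s > 0" using that f1(2) by simp
      thus ?thesis using that by (simp add: less_imp_le)
    qed
    have G: "\<forall>r>0. \<exists>y. ((\<lambda>s. s ^ (n - 1) * u' s) has_real_derivative y) (at r) \<and> y \<le> 0"
      using dg dgn by blast
    have unp: "\<forall>s>0. u' s \<le> 0" using u'_nonpos[OF n3 cont d0 du G] by blast
    have gni: "y ^ (n - 1) * u' y \<le> x ^ (n - 1) * u' x" if "0 < x" "x \<le> y" for x y
    proof (rule DERIV_nonpos_imp_nonincreasing[of x y "\<lambda>s. s ^ (n - 1) * u' s", OF \<open>x \<le> y\<close>])
      fix z assume "x \<le> z" "z \<le> y"
      hence "z > 0" using that by simp
      thus "\<exists>y. ((\<lambda>s. s ^ (n - 1) * u' s) has_real_derivative y) (at z) \<and> y \<le> 0" using G by blast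
    qed
    have rp: "r > 0" using r r0 by simp
    have low: "u r + r ^ (n - 1) * u' r * r powr (2 - real n) / (real n - 2) \<ge> 0"
      by (rule u_lower[OF n3 du gni pos rp])
    have up: "- (r ^ (n - 1) * u' r) \<ge> k * u r powr p * r powr (real n + l)"
      unfolding k_def q_def
      by (rule g_upper[OF n3 lg _ du dg unp pos fc c r0 r]) (use p1 in simp)
    have "u r \<le> C * r powr ((2 - real n) / 2)"
      unfolding C_def
      by (rule final_bound[OF n3 lg p1 pst r0 r _ k _ up]) (use pos rp low in auto)
    thus "u r \<le> C * r powr ((2 - real n) / 2)" .
  qed
qed

end
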